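(* Let $d\ge3$, $\Omega=\{1,\ldots,d\}$, and $F\le F'\le\mathrm{Sym}(\Omega)$ with $F'$ preserving the orbits of $F$, and suppose $F'$ acts 2-transitively on $\Omega$. Then $G(F,F')$ acts transitively on geodesic segments of any fixed finite length in $T$: for any two geodesic segments $[x_1,x_n]$ and $[x_1',x_n']$ in $T$ (with consecutive vertices $x_1,\ldots,x_n$ and $x_1',\ldots,x_n'$) there exists $g\in G(F,F')$ with $g(x_i)=x_i'$ for all $i$.
   Context: Let $T=\mathcal{T}_d$ be the $d$-regular tree with a fixed edge coloring $c\colon E(T)\to\Omega$ whose restriction $c_v$ to the edges $E(v)$ at each vertex $v$ is a bijection onto $\Omega$. For $g\in\mathrm{Aut}(T)$, $\sigma(g,v)=c_{gv}\circ g_v\circ c_v^{-1}$ with $g_v\colon E(v)\to E(gv)$ induced by $g$. $U(F')=\{g:\sigma(g,v)\in F'\ \forall v\}$, $G(F)=\{g:\sigma(g,v)\in F$ for all but finitely many $v\}$, $G(F,F')=G(F)\cap U(F')$. *)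

theory Defs
  imports "HOL-Combinatorics.Permutations"
begin

text \<open>Concrete model of the d-regular tree T_d with a legal edge colouring:
vertices are reduced words over Omega = {1..d} (no two consecutive letters equal);
w and w@[a] are adjacent and the edge between them has colour a.\<close>

definition Om :: "nat \<Rightarrow> nat set" where
  "Om d = {1..d}"

definition TV :: "nat \<Rightarrow> nat list set" where
  "TV d = {w. set w \<subseteq> Om d \<and> (\<forall>i. Suc i < length w \<longrightarrow> w ! i \<noteq> w ! Suc i)}"

definition adj :: "nat \<Rightarrow> nat list \<Rightarrow> nat list \<Rightarrow> bool" where
  "adj d v w \<longleftrightarrow> v \<in> TV d \<and> w \<in> TV d \<and> ((\<exists>a. w = v @ [a]) \<or> (\<exists>a. v = w @ [a]))"

text \<open>The neighbour of w along the edge of colour a (i.e. c_w^{-1}(a)).\<close>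
definition nbr :: "nat list \<Rightarrow> nat \<Rightarrow> nat list" where
  "nbr w a = (if w \<noteq> [] \<and> last w = a then butlast w else w @ [a])"

definition aut :: "nat \<Rightarrow> (nat list \<Rightarrow> nat list) \<Rightarrow> bool" where
  "aut d g \<longleftrightarrow> bij_betw g (TV d) (TV d) \<and>
     (\<forall>v\<in>TV d. \<forall>w\<in>TV d. adj d v w \<longleftrightarrow> adj d (g v) (g w))"

text \<open>Local action sigma(g,v) = c_{gv} o g_v o c_v^{-1}, as a permutation of {1..d}
(identity outside {1..d}).\<close>
definition sigma :: "nat \<Rightarrow> (nat list \<Rightarrow> nat list) \<Rightarrow> nat list \<Rightarrow> nat \<Rightarrow> nat" where
  "sigma d g v a = (if a \<in> Om d then (THE b. b \<in> Om d \<and> g (nbr v a) = nbr (g v) b) else a)"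

definition perm_group :: "nat \<Rightarrow> (nat \<Rightarrow> nat) set \<Rightarrow> bool" where
  "perm_group d F \<longleftrightarrow> F \<subseteq> {p. p permutes Om d} \<and> id \<in> F \<and>
     (\<forall>p\<in>F. \<forall>q\<in>F. p \<circ> q \<in> F) \<and> (\<forall>p\<in>F. inv p \<in> F)"

definition Uset :: "nat \<Rightarrow> (nat \<Rightarrow> nat) set \<Rightarrow> (nat list \<Rightarrow> nat list) set" where
  "Uset d F' = {g. aut d g \<and> (\<forall>v\<in>TV d. sigma d g v \<in> F')}"

definition Gset :: "nat \<Rightarrow> (nat \<Rightarrow> nat) set \<Rightarrow> (nat list \<Rightarrow> nat list) set" where
  "Gset d F = {g. aut d g \<and> finite {v \<in> TV d. sigma d g v \<notin> F}}"

definition GFF :: "nat \<Rightarrow> (nat \<Rightarrow> nat) set \<Rightarrow> (nat \<Rightarrow> nat) set \<Rightarrow> (nat list \<Rightarrow> nat list) set" where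
  "GFF d F F' = Gset d F \<inter> Uset d F'"

definition orbit_of :: "(nat \<Rightarrow> nat) set \<Rightarrow> nat \<Rightarrow> nat set" where
  "orbit_of F a = {f a | f. f \<in> F}"

definition preserves_orbits :: "nat \<Rightarrow> (nat \<Rightarrow> nat) set \<Rightarrow> (nat \<Rightarrow> nat) set \<Rightarrow> bool" where
  "preserves_orbits d F' F \<longleftrightarrow> (\<forall>p\<in>F'. \<forall>a\<in>Om d. p ` orbit_of F a = orbit_of F a)"

definition two_transitive :: "nat \<Rightarrow> (nat \<Rightarrow> nat) set \<Rightarrow> bool" where
  "two_transitive d F \<longleftrightarrow> (\<forall>a\<in>Om d. \<forall>b\<in>Om d. \<forall>a'\<in>Om d. \<forall>b'\<in>Om d.
      a \<noteq> b \<longrightarrow> a' \<noteq> b' \<longrightarrow> (\<exists>p\<in>F. p a = a' \<and> p b = b'))"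

definition walk :: "nat \<Rightarrow> nat list list \<Rightarrow> bool" where
  "walk d xs \<longleftrightarrow> xs \<noteq> [] \<and> set xs \<subseteq> TV d \<and>
     (\<forall>i. Suc i < length xs \<longrightarrow> adj d (xs ! i) (xs ! Suc i))"

definition tdist :: "nat \<Rightarrow> nat list \<Rightarrow> nat list \<Rightarrow> nat" where
  "tdist d v w = (LEAST n. \<exists>xs. walk d xs \<and> hd xs = v \<and> last xs = w \<and> length xs = Suc n)"

definition geodesic :: "nat \<Rightarrow> nat list list \<Rightarrow> bool" where
  "geodesic d xs \<longleftrightarrow> walk d xs \<and> tdist d (hd xs) (last xs) = length xs - 1"

end

theory Submission
  imports Defs
begin


lemma TV_Nil[simp]: "[] \<in> TV d" by (simp add: TV_def)

lemma TV_snoc: "w @ [a] \<in> TV d \<longleftrightarrow> w \<in> TV d \<and> a \<in> Om d \<and> (w \<noteq> [] \<longrightarrow> last w \<noteq> a)"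
proof -
  have "(\<forall>i. Suc i < length (w@[a]) \<longrightarrow> (w@[a]) ! i \<noteq> (w@[a]) ! Suc i) \<longleftrightarrow>
        (\<forall>i. Suc i < length w \<longrightarrow> w ! i \<noteq> w ! Suc i) \<and> (w \<noteq> [] \<longrightarrow> last w \<noteq> a)"
  proof (cases w rule: rev_cases)
    case Nil then show ?thesis by simp
  next
    case (snoc u b)
    show ?thesis
    proof
      assume H: "\<forall>i. Suc i < length (w@[a]) \<longrightarrow> (w@[a]) ! i \<noteq> (w@[a]) ! Suc i"
      have 1: "\<forall>i. Suc i < length w \<longrightarrow> w ! i \<noteq> w ! Suc i"
      proof (intro allI impI)
        fix i assume "Suc i < length w"
        with H[rule_format, of i] show "w ! i \<noteq> w ! Suc i" by (simp add: nth_append)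
      qed
      have "last w \<noteq> a" using H[rule_format, of "length u"] snoc by (simp add: nth_append)
      with 1 show "(\<forall>i. Suc i < length w \<longrightarrow> w ! i \<noteq> w ! Suc i) \<and> (w \<noteq> [] \<longrightarrow> last w \<noteq> a)" by simp
    next
      assume H: "(\<forall>i. Suc i < length w \<longrightarrow> w ! i \<noteq> w ! Suc i) \<and> (w \<noteq> [] \<longrightarrow> last w \<noteq> a)"
      show "\<forall>i. Suc i < length (w@[a]) \<longrightarrow> (w@[a]) ! i \<noteq> (w@[a]) ! Suc i"
      proof (intro allI impI)
        fix i assume i: "Suc i < length (w@[a])"
        show "(w@[a]) ! i \<noteq> (w@[a]) ! Suc i"
        proof (cases "Suc i < length w")
          case True then show ?thesis using H by (simp add: nth_append)
        next
          case False
          then have "i = length u" using i snoc by simp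
          then show ?thesis using H snoc by (simp add: nth_append)
        qed
      qed
    qed
  qed
  then show ?thesis by (auto simp: TV_def)
qed

lemma TV_Cons: "a # w \<in> TV d \<longleftrightarrow> w \<in> TV d \<and> a \<in> Om d \<and> (w \<noteq> [] \<longrightarrow> hd w \<noteq> a)"
proof -
  have "(\<forall>i. Suc i < length (a#w) \<longrightarrow> (a#w) ! i \<noteq> (a#w) ! Suc i) \<longleftrightarrow>
        (\<forall>i. Suc i < length w \<longrightarrow> w ! i \<noteq> w ! Suc i) \<and> (w \<noteq> [] \<longrightarrow> hd w \<noteq> a)"
  proof
    assume H: "\<forall>i. Suc i < length (a#w) \<longrightarrow> (a#w) ! i \<noteq> (a#w) ! Suc i"
    have "\<forall>i. Suc i < length w \<longrightarrow> w ! i \<noteq> w ! Suc i"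
      using H by (metis Suc_less_eq length_Cons nth_Cons_Suc)
    moreover have "w \<noteq> [] \<longrightarrow> hd w \<noteq> a" using H[rule_format, of 0] by (cases w) auto
    ultimately show "(\<forall>i. Suc i < length w \<longrightarrow> w ! i \<noteq> w ! Suc i) \<and> (w \<noteq> [] \<longrightarrow> hd w \<noteq> a)" by simp
  next
    assume H: "(\<forall>i. Suc i < length w \<longrightarrow> w ! i \<noteq> w ! Suc i) \<and> (w \<noteq> [] \<longrightarrow> hd w \<noteq> a)"
    show "\<forall>i. Suc i < length (a#w) \<longrightarrow> (a#w) ! i \<noteq> (a#w) ! Suc i"
    proof (intro allI impI)
      fix i assume i: "Suc i < length (a#w)"
      show "(a#w) ! i \<noteq> (a#w) ! Suc i"
      proof (cases i)
        case 0 then show ?thesis using H i by (cases w) auto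
      next
        case (Suc j) then show ?thesis using H i by simp
      qed
    qed
  qed
  then show ?thesis by (auto simp: TV_def)
qed

lemma TV_take: "w \<in> TV d \<Longrightarrow> take k w \<in> TV d"
  unfolding TV_def by (auto dest: in_set_takeD)

lemma TV_butlast: "w \<in> TV d \<Longrightarrow> butlast w \<in> TV d"
  by (metis TV_take butlast_conv_take)

lemma TV_tl: "w \<in> TV d \<Longrightarrow> tl w \<in> TV d"
  by (cases w) (auto simp: TV_Cons)

lemma TV_nth: "w \<in> TV d \<Longrightarrow> i < length w \<Longrightarrow> w ! i \<in> Om d"
  unfolding TV_def by auto

lemma nbr_inj: "nbr u b = nbr u b' \<Longrightarrow> b = b'"
  unfolding nbr_def by (auto split: if_splits dest: arg_cong[where f=length])

lemma nbr_TV: "v \<in> TV d \<Longrightarrow> a \<in> Om d \<Longrightarrow> nbr v a \<in> TV d"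
  unfolding nbr_def by (auto simp: TV_snoc TV_butlast)

lemma adj_sym: "adj d v w = adj d w v" unfolding adj_def by auto

lemma nbr_adj: "v \<in> TV d \<Longrightarrow> a \<in> Om d \<Longrightarrow> adj d v (nbr v a)"
  unfolding adj_def using nbr_TV[of v d a]
  by (auto simp: nbr_def) (metis append_butlast_last_id)

lemma adj_nbr: "adj d u u' \<Longrightarrow> \<exists>b\<in>Om d. u' = nbr u b"
  unfolding adj_def
proof (elim conjE disjE exE)
  fix a assume "u \<in> TV d" "u' \<in> TV d" "u' = u @ [a]"
  then show "\<exists>b\<in>Om d. u' = nbr u b" by (auto simp: TV_snoc nbr_def)
next
  fix a assume "u \<in> TV d" "u' \<in> TV d" "u = u' @ [a]"
  then show "\<exists>b\<in>Om d. u' = nbr u b" by (auto simp: TV_snoc nbr_def)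
qed

lemma sigma_eq: "a \<in> Om d \<Longrightarrow> b \<in> Om d \<Longrightarrow> g (nbr v a) = nbr (g v) b \<Longrightarrow> sigma d g v a = b"
  unfolding sigma_def by (auto intro!: the_equality dest: nbr_inj)




lemma aut_TV: "aut d g \<Longrightarrow> v \<in> TV d \<Longrightarrow> g v \<in> TV d"
  unfolding aut_def bij_betw_def by auto

lemma aut_comp: assumes "aut d g" "aut d h" shows "aut d (g \<circ> h)"
proof -
  have "bij_betw (g \<circ> h) (TV d) (TV d)" using assms unfolding aut_def by (meson bij_betw_trans)
  moreover have "adj d v w \<longleftrightarrow> adj d ((g \<circ> h) v) ((g \<circ> h) w)" if "v \<in> TV d" "w \<in> TV d" for v w
  proof -
    have h1: "adj d v w \<longleftrightarrow> adj d (h v) (h w)" using assms(2) that unfolding aut_def by blast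
    have h2: "adj d (h v) (h w) \<longleftrightarrow> adj d (g (h v)) (g (h w))"
      using assms(1) aut_TV[OF assms(2)] that unfolding aut_def by blast
    show ?thesis using h1 h2 by simp
  qed
  ultimately show ?thesis unfolding aut_def by auto
qed

lemma aut_inv: assumes "aut d g" shows "aut d (inv_into (TV d) g)"
proof -
  have b: "bij_betw g (TV d) (TV d)" using assms unfolding aut_def by auto
  have bi: "bij_betw (inv_into (TV d) g) (TV d) (TV d)" using bij_betw_inv_into[OF b] .
  have "adj d v w \<longleftrightarrow> adj d (inv_into (TV d) g v) (inv_into (TV d) g w)" if "v \<in> TV d" "w \<in> TV d" for v w
  proof -
    have iv: "inv_into (TV d) g v \<in> TV d" "inv_into (TV d) g w \<in> TV d"
      using bi that bij_betwE by blast+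
    have "g (inv_into (TV d) g v) = v" "g (inv_into (TV d) g w) = w"
      using b that by (meson bij_betw_inv_into_right)+
    then show ?thesis using assms iv unfolding aut_def by metis
  qed
  with bi show ?thesis unfolding aut_def by auto
qed

definition cp :: "nat \<Rightarrow> (nat list \<Rightarrow> nat list) \<Rightarrow> bool" where
  "cp d g \<longleftrightarrow> aut d g \<and> (\<forall>v\<in>TV d. \<forall>a\<in>Om d. g (nbr v a) = nbr (g v) a)"

lemma cp_comp: "cp d g \<Longrightarrow> cp d h \<Longrightarrow> cp d (g \<circ> h)"
  unfolding cp_def by (auto simp: aut_comp aut_TV)

lemma cp_inv: assumes "cp d g" shows "cp d (inv_into (TV d) g)"
proof -
  have a: "aut d g" using assms cp_def by auto
  have b: "bij_betw g (TV d) (TV d)" using a unfolding aut_def by auto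
  let ?h = "inv_into (TV d) g"
  have "?h (nbr v x) = nbr (?h v) x" if "v \<in> TV d" "x \<in> Om d" for v x
  proof -
    have hv: "?h v \<in> TV d" using b that by (meson bij_betwE bij_betw_inv_into)
    have gh: "g (?h v) = v" using b that by (meson bij_betw_inv_into_right)
    have "g (nbr (?h v) x) = nbr v x" using assms hv that gh unfolding cp_def by auto
    moreover have "nbr (?h v) x \<in> TV d" using hv that nbr_TV by blast
    ultimately show ?thesis using b by (metis bij_betw_inv_into_left)
  qed
  then show ?thesis using aut_inv[OF a] unfolding cp_def by auto
qed

definition sgen :: "nat \<Rightarrow> nat list \<Rightarrow> nat list" where
  "sgen a w = (if w \<noteq> [] \<and> hd w = a then tl w else a # w)"

lemma sgen_TV: "a \<in> Om d \<Longrightarrow> w \<in> TV d \<Longrightarrow> sgen a w \<in> TV d"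
  unfolding sgen_def by (auto simp: TV_Cons TV_tl)

lemma sgen_invol: "w \<in> TV d \<Longrightarrow> sgen a (sgen a w) = w"
  unfolding sgen_def by (cases w) (auto simp: TV_Cons)

lemma sgen_nbr: "sgen a (nbr v b) = nbr (sgen a v) b"
  unfolding sgen_def nbr_def
  by (cases v rule: rev_cases; cases "butlast v"; auto simp: hd_append butlast_append)




lemma adj_forward: assumes "v \<in> TV d" "w \<in> TV d" "adj d v w"
  "\<And>u. u \<in> TV d \<Longrightarrow> f u \<in> TV d" "\<And>u b. u \<in> TV d \<Longrightarrow> b \<in> Om d \<Longrightarrow> f (nbr u b) = nbr (f u) b"
  shows "adj d (f v) (f w)"
proof -
  obtain b where b: "b \<in> Om d" "w = nbr v b" using adj_nbr[OF assms(3)] by blast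
  then show ?thesis using assms nbr_adj by auto
qed

lemma cp_sgen: assumes "a \<in> Om d" shows "cp d (sgen a)"
proof -
  have bij: "bij_betw (sgen a) (TV d) (TV d)"
    by (rule bij_betw_byWitness[where f'="sgen a"]) (auto simp: sgen_invol sgen_TV assms)
  have "adj d v w \<longleftrightarrow> adj d (sgen a v) (sgen a w)" if "v \<in> TV d" "w \<in> TV d" for v w
  proof
    assume "adj d v w" then show "adj d (sgen a v) (sgen a w)"
      using adj_forward[of v d w "sgen a"] that by (simp add: sgen_TV assms sgen_nbr)
  next
    assume "adj d (sgen a v) (sgen a w)" then have "adj d (sgen a (sgen a v)) (sgen a (sgen a w))"
      using adj_forward[of "sgen a v" d "sgen a w" "sgen a"] that by (simp add: sgen_TV assms sgen_nbr)
    then show "adj d v w" using that by (simp add: sgen_invol)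
  qed
  with bij show ?thesis unfolding cp_def aut_def by (simp add: sgen_nbr)
qed

lemma cp_id: "cp d id"
  unfolding cp_def aut_def by auto

lemma cp_to_root: "u \<in> TV d \<Longrightarrow> \<exists>t. cp d t \<and> t u = []"
proof (induction u)
  case Nil have "cp d id \<and> id [] = []" using cp_id[of d] by simp then show ?case by blast
next
  case (Cons c u)
  then have u: "u \<in> TV d" and c: "c \<in> Om d" and h: "u \<noteq> [] \<longrightarrow> hd u \<noteq> c" by (auto simp: TV_Cons)
  obtain t where t: "cp d t" "t u = []" using Cons u by blast
  have "sgen c (c # u) = u" by (simp add: sgen_def)
  then have "cp d (t \<circ> sgen c) \<and> (t \<circ> sgen c) (c # u) = []" using cp_comp[OF t(1) cp_sgen[OF c]] t by simp
  then show ?case by blast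
qed




definition nbw :: "nat \<Rightarrow> nat list list \<Rightarrow> bool" where
  "nbw d xs \<longleftrightarrow> walk d xs \<and> (\<forall>i. i + 2 < length xs \<longrightarrow> xs ! i \<noteq> xs ! (i + 2))"

lemma geodesic_nbw: assumes "geodesic d xs" shows "nbw d xs"
proof -
  have w: "walk d xs" and td: "tdist d (hd xs) (last xs) = length xs - 1"
    using assms unfolding geodesic_def by auto
  have "xs ! i \<noteq> xs ! (i + 2)" if i: "i + 2 < length xs" for i
  proof
    assume eq: "xs ! i = xs ! (i + 2)"
    define ys where "ys = take (Suc i) xs @ drop (i + 3) xs"
    have len: "length ys = length xs - 2" using i by (simp add: ys_def)
    have nth: "ys ! j = xs ! (if j \<le> i then j else j + 2)" if "j < length ys" for j
    proof (cases "j \<le> i")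
      case True
      then have "ys ! j = take (Suc i) xs ! j" using i unfolding ys_def by (simp add: nth_append)
      then show ?thesis using True by simp
    next
      case False
      then have "ys ! j = drop (i + 3) xs ! (j - Suc i)" using i unfolding ys_def by (simp add: nth_append)
      also have "\<dots> = xs ! (i + 3 + (j - Suc i))" using that len i False by (subst nth_drop) auto
      also have "i + 3 + (j - Suc i) = j + 2" using False by simp
      finally show ?thesis using False by simp
    qed
    have wy: "walk d ys"
      unfolding walk_def
    proof (intro conjI allI impI)
      show "ys \<noteq> []" using len i by auto
      show "set ys \<subseteq> TV d" using w unfolding walk_def ys_def
        by (auto dest: in_set_takeD in_set_dropD)
    next
      fix j assume j: "Suc j < length ys"
      show "adj d (ys ! j) (ys ! Suc j)"
      proof (cases "j < i")
        case True
        then have "Suc j < length xs" using i by simp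
        then show ?thesis using True nth[of j] nth[of "Suc j"] j w unfolding walk_def by simp
      next
        case False
        then have "ys ! j = xs ! (j + 2)" using nth[of j] j eq by (cases "j = i") auto
        moreover have "ys ! Suc j = xs ! Suc (j + 2)" using nth[of "Suc j"] j False by simp
        moreover have "Suc (j + 2) < length xs" using j len by simp
        ultimately show ?thesis using w unfolding walk_def by simp
      qed
    qed
    have hd: "hd ys = hd xs" using i by (simp add: ys_def hd_append hd_conv_nth)
    have "last ys = last xs"
    proof (cases "i + 3 < length xs")
      case True then show ?thesis by (simp add: ys_def)
    next
      case False
      then have "length xs = i + 3" using i by simp
      then have "last xs = xs ! (i + 2)"
      proof -
        assume L: "length xs = i + 3"
        then have "xs \<noteq> []" by auto
        then have "last xs = xs ! (length xs - 1)" by (rule last_conv_nth)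
        then show ?thesis using L by simp
      qed
      moreover have "last ys = xs ! i"
      proof -
        have "ys \<noteq> []" "length ys = Suc i" using len \<open>length xs = i + 3\<close> by auto
        then have "last ys = ys ! i" by (simp add: last_conv_nth)
        then show ?thesis using nth[of i] \<open>length ys = Suc i\<close> by simp
      qed
      ultimately show ?thesis using eq by simp
    qed
    then have "tdist d (hd xs) (last xs) \<le> length ys - 1"
      unfolding tdist_def using wy hd len i by (intro Least_le) (rule exI[of _ ys], simp)
    then show False using td len i by linarith
  qed
  then show ?thesis using w unfolding nbw_def by auto
qed

lemma nbw_map: assumes "aut d g" "nbw d xs" shows "nbw d (map g xs)"
proof -
  have w: "walk d xs" and nb: "\<forall>i. i + 2 < length xs \<longrightarrow> xs ! i \<noteq> xs ! (i + 2)"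
    using assms(2) unfolding nbw_def by auto
  have inj: "inj_on g (TV d)" and ad: "\<forall>v\<in>TV d. \<forall>w\<in>TV d. adj d v w \<longleftrightarrow> adj d (g v) (g w)"
    using assms(1) unfolding aut_def bij_betw_def by auto
  have set: "set xs \<subseteq> TV d" using w walk_def by auto
  have "walk d (map g xs)" unfolding walk_def
  proof (intro conjI allI impI)
    show "map g xs \<noteq> []" using w walk_def by auto
    show "set (map g xs) \<subseteq> TV d" using set aut_TV[OF assms(1)] by auto
  next
    fix i assume "Suc i < length (map g xs)"
    then have "xs ! i \<in> TV d" "xs ! Suc i \<in> TV d" "adj d (xs ! i) (xs ! Suc i)"
      using w set unfolding walk_def by (auto simp: subset_iff)
    moreover have "map g xs ! i = g (xs ! i)" "map g xs ! Suc i = g (xs ! Suc i)"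
      using \<open>Suc i < length (map g xs)\<close> by auto
    ultimately show "adj d (map g xs ! i) (map g xs ! Suc i)" using ad by metis
  qed
  moreover have "map g xs ! i \<noteq> map g xs ! (i + 2)" if "i + 2 < length (map g xs)" for i
  proof -
    have "i + 2 < length xs" using that by simp
    then have "xs ! i \<noteq> xs ! (i + 2)" "xs ! i \<in> TV d" "xs ! (i + 2) \<in> TV d" using nb set by (auto simp: subset_iff)
    then have "g (xs ! i) \<noteq> g (xs ! (i + 2))" using inj by (metis inj_on_eq_iff)
    then show ?thesis using \<open>i + 2 < length xs\<close> by simp
  qed
  ultimately show ?thesis unfolding nbw_def by auto
qed

lemma nbw_root: assumes "nbw d zs" "hd zs = []"
  shows "\<forall>i<length zs. length (zs ! i) = i \<and> (\<forall>j\<le>i. zs ! j = take j (zs ! i))"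
proof (intro allI)
  fix i show "i < length zs \<longrightarrow> length (zs ! i) = i \<and> (\<forall>j\<le>i. zs ! j = take j (zs ! i))"
  proof (induction i)
    case 0 then show ?case using assms by (auto simp: hd_conv_nth)
  next
    case (Suc i)
    show ?case
    proof
      assume si: "Suc i < length zs"
      have "i < length zs" using si by simp
      then have IH: "length (zs ! i) = i" "\<forall>j\<le>i. zs ! j = take j (zs ! i)" using Suc.IH by blast+
      have "adj d (zs ! i) (zs ! Suc i)" using assms(1) si unfolding nbw_def walk_def by blast
      then consider a where "zs ! Suc i = zs ! i @ [a]" | a where "zs ! i = zs ! Suc i @ [a]"
        unfolding adj_def by blast
      then show "length (zs ! Suc i) = Suc i \<and> (\<forall>j\<le>Suc i. zs ! j = take j (zs ! Suc i))"
      proof cases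
        case (1 a)
        have L: "length (zs ! Suc i) = Suc i" using 1 IH(1) by simp
        have "zs ! j = take j (zs ! Suc i)" if "j \<le> Suc i" for j
        proof (cases "j = Suc i")
          case True then show ?thesis using L by simp
        next
          case False
          then have "j \<le> i" using that by simp
          then have "zs ! j = take j (zs ! i)" using IH(2) by blast
          also have "\<dots> = take j (zs ! Suc i)" using 1 \<open>j \<le> i\<close> IH(1) by simp
          finally show ?thesis .
        qed
        then show ?thesis using L by blast
      next
        case (2 a)
        then have "length (zs ! i) = Suc (length (zs ! Suc i))" by simp
        then obtain k where k: "i = Suc k" using IH(1) by (metis)
        have "zs ! Suc i = take k (zs ! i)" using 2 IH(1) k by simp
        also have "\<dots> = zs ! k" using IH(2)[rule_format, of k] k by simp
        finally have "zs ! k = zs ! (k + 2)" using k by simp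
        moreover have "k + 2 < length zs" using si k by simp
        ultimately show ?thesis using assms(1) unfolding nbw_def by blast
      qed
    qed
  qed
qed

lemma nbw_root_word: assumes "nbw d zs" "hd zs = []"
  shows "\<exists>w\<in>TV d. length w = length zs - 1 \<and> (\<forall>i<length zs. zs ! i = take i w)"
proof -
  have ne: "zs \<noteq> []" and set: "set zs \<subseteq> TV d" using assms(1) unfolding nbw_def walk_def by auto
  let ?w = "zs ! (length zs - 1)"
  have wTV: "?w \<in> TV d" using ne set by (simp add: subset_iff)
  have R: "length (zs ! (length zs - 1)) = length zs - 1 \<and> (\<forall>j\<le>length zs - 1. zs ! j = take j (zs ! (length zs - 1)))"
  proof -
    have "length zs - 1 < length zs" using ne by simp
    from nbw_root[OF assms, rule_format, OF this] show ?thesis .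
  qed
  moreover have "\<forall>i<length zs. zs ! i = take i ?w"
  proof (intro allI impI)
    fix i assume "i < length zs"
    then have "i \<le> length zs - 1" by simp
    then show "zs ! i = take i ?w" using R by blast
  qed
  ultimately show ?thesis using wTV by blast
qed




definition hmap :: "(nat list \<Rightarrow> nat \<Rightarrow> nat) \<Rightarrow> nat list \<Rightarrow> nat list" where
  "hmap L w = map (\<lambda>i. L (take i w) (w ! i)) [0..<length w]"

lemma hmap_Nil[simp]: "hmap L [] = []" by (simp add: hmap_def)

lemma hmap_length[simp]: "length (hmap L w) = length w" by (simp add: hmap_def)

lemma hmap_snoc[simp]: "hmap L (w @ [a]) = hmap L w @ [L w a]"
  unfolding hmap_def by (simp add: nth_append)

lemma hmap_nth: "i < length w \<Longrightarrow> hmap L w ! i = L (take i w) (w ! i)"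
  unfolding hmap_def by simp

lemma hmap_take: "hmap L (take k w) = take k (hmap L w)"
proof (rule nth_equalityI)
  show "length (hmap L (take k w)) = length (take k (hmap L w))" by simp
  fix i assume "i < length (hmap L (take k w))"
  then have i: "i < k" "i < length w" by auto
  have "hmap L (take k w) ! i = L (take i (take k w)) (take k w ! i)" using i by (simp add: hmap_nth)
  also have "\<dots> = L (take i w) (w ! i)" using i by (simp add: min_def)
  also have "\<dots> = take k (hmap L w) ! i" using i by (simp add: hmap_nth)
  finally show "hmap L (take k w) ! i = take k (hmap L w) ! i" .
qed


lemma hmap_eq_Nil[simp]: "hmap L w = [] \<longleftrightarrow> w = []"
  by (metis hmap_length length_0_conv)

locale Lctx =
  fixes d :: nat and L :: "nat list \<Rightarrow> nat \<Rightarrow> nat"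
  assumes perm: "\<And>v. L v permutes Om d"
    and compat: "\<And>v. v \<in> TV d \<Longrightarrow> v \<noteq> [] \<Longrightarrow> L v (last v) = L (butlast v) (last v)"
begin

lemma Lin: "a \<in> Om d \<Longrightarrow> L v a \<in> Om d"
  by (simp add: permutes_in_image[OF perm])

lemma Linj: "L v a = L v b \<Longrightarrow> a = b"
  using permutes_inj[OF perm[of v]] by (metis injD)

lemma Linv: "L v (inv (L v) b) = b"
  by (rule permutes_inverses(1)[OF perm])

lemma Linv_in: "b \<in> Om d \<Longrightarrow> inv (L v) b \<in> Om d"
  by (simp add: permutes_in_image[OF permutes_inv[OF perm]])

lemma last_h: assumes "w \<in> TV d" "w \<noteq> []" shows "last (hmap L w) = L w (last w)"
proof -
  obtain w0 c where w: "w = w0 @ [c]" using assms(2) by (metis rev_exhaust)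
  have "L w c = L w0 c" using compat[OF assms] w by simp
  then show ?thesis using w by simp
qed

lemma h_TV: "w \<in> TV d \<Longrightarrow> hmap L w \<in> TV d"
proof (induction w rule: rev_induct)
  case Nil then show ?case by simp
next
  case (snoc a w0)
  then have w0: "w0 \<in> TV d" and a: "a \<in> Om d" and l: "w0 \<noteq> [] \<longrightarrow> last w0 \<noteq> a" by (auto simp: TV_snoc)
  have "w0 \<noteq> [] \<longrightarrow> last (hmap L w0) \<noteq> L w0 a"
    using last_h[OF w0] l Linj by metis
  then show ?case using snoc.IH w0 a Lin by (simp add: TV_snoc)
qed

lemma h_inj: "hmap L w = hmap L w' \<Longrightarrow> w = w'"
proof (induction w arbitrary: w' rule: rev_induct)
  case Nil then show ?case by (metis hmap_eq_Nil)
next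
  case (snoc a w0)
  have "length w' = Suc (length w0)" using arg_cong[OF snoc.prems, of length] by simp
  then have "w' \<noteq> []" by auto
  then obtain w1 a' where w': "w' = w1 @ [a']" by (metis rev_exhaust)
  then have e: "hmap L w0 = hmap L w1" "L w0 a = L w1 a'" using snoc.prems by auto
  then have "w0 = w1" using snoc.IH by blast
  then have "a = a'" using e(2) Linj by blast
  then show ?case using \<open>w0 = w1\<close> w' by simp
qed

lemma h_surj: "u \<in> TV d \<Longrightarrow> \<exists>w\<in>TV d. hmap L w = u"
proof (induction u rule: rev_induct)
  case Nil then show ?case by (intro bexI[of _ "[]"]) auto
next
  case (snoc b u0)
  then have u0: "u0 \<in> TV d" and b: "b \<in> Om d" and l: "u0 \<noteq> [] \<longrightarrow> last u0 \<noteq> b" by (auto simp: TV_snoc)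
  obtain w0 where w0: "w0 \<in> TV d" "hmap L w0 = u0" using snoc.IH u0 by blast
  define a where "a = inv (L w0) b"
  have La: "L w0 a = b" unfolding a_def by (rule Linv)
  have a: "a \<in> Om d" unfolding a_def using b by (rule Linv_in)
  have "w0 \<noteq> [] \<longrightarrow> last w0 \<noteq> a"
  proof
    assume ne: "w0 \<noteq> []"
    have "last u0 = L w0 (last w0)" using last_h[OF w0(1) ne] w0(2) by simp
    moreover have "u0 \<noteq> []" using ne w0(2) by auto
    ultimately show "last w0 \<noteq> a" using l La by auto
  qed
  then have "w0 @ [a] \<in> TV d" using w0 a by (simp add: TV_snoc)
  moreover have "hmap L (w0 @ [a]) = u0 @ [b]" using w0 La by simp
  ultimately show ?case by blast
qed

lemma h_nbr: assumes "v \<in> TV d" "a \<in> Om d" shows "hmap L (nbr v a) = nbr (hmap L v) (L v a)"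
proof (cases "v \<noteq> [] \<and> last v = a")
  case True
  then obtain v0 where v: "v = v0 @ [a]" by (metis append_butlast_last_id)
  have c: "L v a = L v0 a" using compat[OF assms(1)] True v by simp
  show ?thesis using True v c by (simp add: nbr_def)
next
  case False
  then have n: "nbr v a = v @ [a]" unfolding nbr_def by auto
  have "\<not> (hmap L v \<noteq> [] \<and> last (hmap L v) = L v a)"
  proof
    assume H: "hmap L v \<noteq> [] \<and> last (hmap L v) = L v a"
    then have ne: "v \<noteq> []" by auto
    then have "L v (last v) = L v a" using last_h[OF assms(1)] H by simp
    then have "last v = a" by (rule Linj)
    with False ne show False by simp
  qed
  then have "nbr (hmap L v) (L v a) = hmap L v @ [L v a]" unfolding nbr_def by auto
  then show ?thesis using n by simp
qed

lemma h_aut: "aut d (hmap L)"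
proof -
  have bij: "bij_betw (hmap L) (TV d) (TV d)"
    unfolding bij_betw_def using h_TV h_surj h_inj by (auto simp: inj_on_def)
  have "adj d v w \<longleftrightarrow> adj d (hmap L v) (hmap L w)" if v: "v \<in> TV d" and w: "w \<in> TV d" for v w
  proof
    assume "adj d v w"
    then obtain b where b: "b \<in> Om d" "w = nbr v b" using adj_nbr by blast
    then show "adj d (hmap L v) (hmap L w)" using h_nbr[OF v b(1)] nbr_adj h_TV[OF v] Lin by simp
  next
    assume "adj d (hmap L v) (hmap L w)"
    then obtain b where b: "b \<in> Om d" "hmap L w = nbr (hmap L v) b" using adj_nbr by blast
    define a where "a = inv (L v) b"
    have a: "a \<in> Om d" "L v a = b" unfolding a_def using b Linv_in Linv by auto
    have "hmap L (nbr v a) = hmap L w" using h_nbr[OF v a(1)] a b by simp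
    then have "nbr v a = w" by (rule h_inj)
    then show "adj d v w" using nbr_adj[OF v a(1)] by simp
  qed
  with bij show ?thesis unfolding aut_def by auto
qed

end




definition P0 :: "(nat \<Rightarrow> nat) set \<Rightarrow> nat list \<Rightarrow> nat list \<Rightarrow> (nat \<Rightarrow> nat)" where
  "P0 F' w w' = (SOME p. p \<in> F' \<and> (w \<noteq> [] \<longrightarrow> p (w ! 0) = w' ! 0))"

definition Pch :: "(nat \<Rightarrow> nat) set \<Rightarrow> nat list \<Rightarrow> nat list \<Rightarrow> nat \<Rightarrow> (nat \<Rightarrow> nat)" where
  "Pch F' w w' k = (SOME p. p \<in> F' \<and> (0 < k \<and> k < length w \<longrightarrow>
      p (w ! (k - 1)) = w' ! (k - 1) \<and> p (w ! k) = w' ! k))"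

definition Fch :: "(nat \<Rightarrow> nat) set \<Rightarrow> nat \<Rightarrow> nat \<Rightarrow> (nat \<Rightarrow> nat)" where
  "Fch F c c' = (if \<exists>f\<in>F. f c = c' then SOME f. f \<in> F \<and> f c = c' else id)"

fun Lr :: "(nat \<Rightarrow> nat) set \<Rightarrow> (nat \<Rightarrow> nat) set \<Rightarrow> nat list \<Rightarrow> nat list \<Rightarrow> nat list \<Rightarrow> (nat \<Rightarrow> nat)" where
  "Lr F F' w w' [] = P0 F' w w'"
| "Lr F F' w w' (a # r) = (if Suc (length r) < length w \<and> rev r @ [a] = take (Suc (length r)) w
      then Pch F' w w' (Suc (length r)) else Fch F a (Lr F F' w w' r a))"

definition LL :: "(nat \<Rightarrow> nat) set \<Rightarrow> (nat \<Rightarrow> nat) set \<Rightarrow> nat list \<Rightarrow> nat list \<Rightarrow> nat list \<Rightarrow> (nat \<Rightarrow> nat)" where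
  "LL F F' w w' v = Lr F F' w w' (rev v)"

lemma LL_Nil: "LL F F' w w' [] = P0 F' w w'" by (simp add: LL_def)

lemma LL_snoc: "LL F F' w w' (v @ [a]) = (if Suc (length v) < length w \<and> v @ [a] = take (Suc (length v)) w
      then Pch F' w w' (Suc (length v)) else Fch F a (LL F F' w w' v a))"
  by (simp add: LL_def)

locale Setting =
  fixes d :: nat and F F' :: "(nat \<Rightarrow> nat) set" and w w' :: "nat list"
  assumes d: "d \<ge> 3" and pF: "perm_group d F" and pF': "perm_group d F'" and sub: "F \<subseteq> F'"
    and po: "preserves_orbits d F' F" and tt: "two_transitive d F'"
    and w: "w \<in> TV d" and w': "w' \<in> TV d" and len: "length w = length w'"
begin

abbreviation "L \<equiv> LL F F' w w'"

lemma idF: "id \<in> F" using pF perm_group_def by auto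
lemma idF': "id \<in> F'" using pF' perm_group_def by auto

lemma other: "a \<in> Om d \<Longrightarrow> \<exists>b\<in>Om d. b \<noteq> a"
  using d by (intro bexI[of _ "if a = 1 then 2 else 1"]) (auto simp: Om_def)

lemma P0_prop: "P0 F' w w' \<in> F' \<and> (w \<noteq> [] \<longrightarrow> P0 F' w w' (w ! 0) = w' ! 0)"
proof -
  have "\<exists>p. p \<in> F' \<and> (w \<noteq> [] \<longrightarrow> p (w ! 0) = w' ! 0)"
  proof (cases "w = []")
    case True then show ?thesis using idF' by blast
  next
    case False
    then have "0 < length w" "0 < length w'" using len by auto
    then have a: "w ! 0 \<in> Om d" "w' ! 0 \<in> Om d" using TV_nth[OF w] TV_nth[OF w'] by auto
    obtain b where b: "b \<in> Om d" "b \<noteq> w ! 0" using other[OF a(1)] by blast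
    obtain b' where b': "b' \<in> Om d" "b' \<noteq> w' ! 0" using other[OF a(2)] by blast
    have "w ! 0 \<noteq> b" "w' ! 0 \<noteq> b'" using b b' by auto
    from tt[unfolded two_transitive_def, rule_format, OF a(1) b(1) a(2) b'(1) this]
    obtain p where "p \<in> F'" "p (w ! 0) = w' ! 0" by blast
    then show ?thesis by blast
  qed
  then show ?thesis unfolding P0_def by (rule someI_ex)
qed

lemma Pch_prop: "Pch F' w w' k \<in> F' \<and> (0 < k \<and> k < length w \<longrightarrow>
      Pch F' w w' k (w ! (k - 1)) = w' ! (k - 1) \<and> Pch F' w w' k (w ! k) = w' ! k)"
proof -
  have "\<exists>p. p \<in> F' \<and> (0 < k \<and> k < length w \<longrightarrow>
      p (w ! (k - 1)) = w' ! (k - 1) \<and> p (w ! k) = w' ! k)"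
  proof (cases "0 < k \<and> k < length w")
    case False then show ?thesis using idF' by blast
  next
    case True
    then have "k - 1 < length w" "k < length w" "k - 1 < length w'" "k < length w'" using len by auto
    then have a: "w ! (k - 1) \<in> Om d" "w ! k \<in> Om d" "w' ! (k - 1) \<in> Om d" "w' ! k \<in> Om d"
      using TV_nth[OF w] TV_nth[OF w'] by auto
    have ne: "w ! (k - 1) \<noteq> w ! k" "w' ! (k - 1) \<noteq> w' ! k"
    proof -
      have kk: "Suc (k - 1) = k" using True by simp
      have H: "\<forall>i. Suc i < length w \<longrightarrow> w ! i \<noteq> w ! Suc i" "\<forall>i. Suc i < length w' \<longrightarrow> w' ! i \<noteq> w' ! Suc i"
        using w w' unfolding TV_def by auto
      have "Suc (k - 1) < length w" "Suc (k - 1) < length w'" using True len by auto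
      then have "w ! (k - 1) \<noteq> w ! Suc (k - 1)" "w' ! (k - 1) \<noteq> w' ! Suc (k - 1)"
        using H by blast+
      then show "w ! (k - 1) \<noteq> w ! k" "w' ! (k - 1) \<noteq> w' ! k" using kk by auto
    qed
    from tt[unfolded two_transitive_def, rule_format, OF a(1) a(2) a(3) a(4) ne]
    obtain p where "p \<in> F'" "p (w ! (k - 1)) = w' ! (k - 1)" "p (w ! k) = w' ! k" by blast
    then show ?thesis by blast
  qed
  then show ?thesis unfolding Pch_def by (rule someI_ex)
qed

lemma Fch_F: "Fch F c c' \<in> F"
proof (cases "\<exists>f\<in>F. f c = c'")
  case True
  then have "\<exists>f. f \<in> F \<and> f c = c'" by blast
  then show ?thesis using True unfolding Fch_def by (metis (mono_tags, lifting) someI_ex)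
next
  case False then show ?thesis using idF unfolding Fch_def by simp
qed

lemma Fch_prop: "\<exists>f\<in>F. f c = c' \<Longrightarrow> Fch F c c' c = c'"
proof -
  assume H: "\<exists>f\<in>F. f c = c'"
  then have "\<exists>f. f \<in> F \<and> f c = c'" by blast
  then have "(SOME f. f \<in> F \<and> f c = c') \<in> F \<and> (SOME f. f \<in> F \<and> f c = c') c = c'" by (rule someI_ex)
  then show ?thesis using H unfolding Fch_def by simp
qed

lemma L_F': "L v \<in> F'"
proof (induction v rule: rev_induct)
  case Nil then show ?case using P0_prop by (simp add: LL_Nil)
next
  case (snoc a v) then show ?case using Pch_prop Fch_F sub by (auto simp: LL_snoc)
qed

lemma L_perm: "L v permutes Om d"
  using L_F' pF' unfolding perm_group_def by auto

lemma key: "j < length w \<Longrightarrow> L (take j w) (w ! j) = w' ! j"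
proof (cases j)
  case 0
  assume "j < length w"
  then show ?thesis using 0 P0_prop by (auto simp: LL_Nil)
next
  case (Suc j0)
  assume j: "j < length w"
  have t: "take (Suc j0) w = take j0 w @ [w ! j0]" using j Suc by (simp add: take_Suc_conv_app_nth)
  have lt: "length (take j0 w) = j0" using j Suc by simp
  have "L (take j w) = Pch F' w w' (Suc j0)"
    using Suc t lt j by (simp add: LL_snoc)
  then show ?thesis using Pch_prop[of j] Suc j by simp
qed

lemma compat: assumes "v \<in> TV d" "v \<noteq> []" shows "L v (last v) = L (butlast v) (last v)"
proof -
  obtain v0 c where v: "v = v0 @ [c]" using assms(2) by (metis rev_exhaust)
  have c: "c \<in> Om d" using assms(1) v by (simp add: TV_snoc)
  show ?thesis
  proof (cases "Suc (length v0) < length w \<and> v0 @ [c] = take (Suc (length v0)) w")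
    case True
    then have L1: "L v = Pch F' w w' (Suc (length v0))" unfolding v LL_snoc by (rule if_P)
    have e: "v0 @ [c] = take (Suc (length v0)) w" using True by simp
    then have "(v0 @ [c]) ! length v0 = take (Suc (length v0)) w ! length v0" by (rule arg_cong)
    then have cw: "c = w ! length v0" by (simp add: nth_append)
    have "v0 = take (length v0) (v0 @ [c])" by simp
    also have "\<dots> = take (length v0) (take (Suc (length v0)) w)" using e by simp
    also have "\<dots> = take (length v0) w" by simp
    finally have v0: "v0 = take (length v0) w" .
    have "L v c = w' ! length v0" using L1 Pch_prop[of "Suc (length v0)"] True cw by simp
    moreover have "L v0 c = w' ! length v0" using key[of "length v0"] True cw v0 by simp
    ultimately show ?thesis using v by simp
  next
    case False
    then have L1: "L v = Fch F c (L v0 c)" unfolding v LL_snoc by (rule if_not_P)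
    have "c \<in> orbit_of F c" using idF unfolding orbit_of_def by (metis (mono_tags, lifting) id_apply mem_Collect_eq)
    then have "L v0 c \<in> L v0 ` orbit_of F c" by blast
    also have "\<dots> = orbit_of F c" using po L_F' c unfolding preserves_orbits_def by blast
    finally have "\<exists>f\<in>F. f c = L v0 c" unfolding orbit_of_def by auto
    then have "L v c = L v0 c" using L1 Fch_prop by simp
    then show ?thesis using v by simp
  qed
qed

lemma Lctx: "Lctx d L"
  using L_perm compat by unfold_locales auto

lemma bad_finite: "finite {v \<in> TV d. L v \<notin> F}"
proof -
  have "{v \<in> TV d. L v \<notin> F} \<subseteq> (\<lambda>k. take k w) ` {..length w}"
  proof
    fix v assume "v \<in> {v \<in> TV d. L v \<notin> F}"
    then have nF: "L v \<notin> F" by simp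
    show "v \<in> (\<lambda>k. take k w) ` {..length w}"
    proof (cases "v = []")
      case True then show ?thesis by (intro image_eqI[of _ _ 0]) auto
    next
      case False
      then obtain v0 c where v: "v = v0 @ [c]" by (metis rev_exhaust)
      show ?thesis
      proof (cases "Suc (length v0) < length w \<and> v0 @ [c] = take (Suc (length v0)) w")
        case True then show ?thesis using v by (intro image_eqI[of _ _ "Suc (length v0)"]) auto
      next
        case False
        then have "L v = Fch F c (L v0 c)" unfolding v LL_snoc by (rule if_not_P)
        then show ?thesis using Fch_F nF by simp
      qed
    qed
  qed
  then show ?thesis by (rule finite_subset) simp
qed

lemma h_w: "hmap L w = w'"
proof (rule nth_equalityI)
  show "length (hmap L w) = length w'" using len by simp
  fix i assume "i < length (hmap L w)"
  then show "hmap L w ! i = w' ! i" using key by (simp add: hmap_nth)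
qed

end




lemma root_word:
  assumes "geodesic d xs"
  shows "\<exists>t w. cp d t \<and> w \<in> TV d \<and> length w = length xs - 1 \<and> (\<forall>i<length xs. t (xs ! i) = take i w)"
proof -
  have nb: "nbw d xs" using geodesic_nbw[OF assms] .
  then have ne: "xs \<noteq> []" and set: "set xs \<subseteq> TV d" unfolding nbw_def walk_def by auto
  then have "hd xs \<in> TV d" by auto
  then obtain t where t: "cp d t" "t (hd xs) = []" using cp_to_root by blast
  have nb1: "nbw d (map t xs)" using nbw_map[OF _ nb] t(1) unfolding cp_def by auto
  have "hd (map t xs) = []" using ne t(2) by (simp add: hd_map)
  then obtain w where w: "w \<in> TV d" "length w = length (map t xs) - 1"
    "\<forall>i<length (map t xs). map t xs ! i = take i w"
    using nbw_root_word[OF nb1] by blast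
  then show ?thesis using t(1) by (intro exI[of _ t] exI[of _ w]) auto
qed

theorem mainTheorem7:
  fixes d :: nat and F F' :: "(nat \<Rightarrow> nat) set"
  assumes "d \<ge> 3"
    and "perm_group d F" and "perm_group d F'" and "F \<subseteq> F'"
    and "preserves_orbits d F' F"
    and "two_transitive d F'"
    and "geodesic d xs" and "geodesic d ys" and "length xs = length ys"
  shows "\<exists>g\<in>GFF d F F'. \<forall>i<length xs. g (xs ! i) = ys ! i"
proof -
  obtain t1 w where t1: "cp d t1" "w \<in> TV d" "length w = length xs - 1"
      "\<forall>i<length xs. t1 (xs ! i) = take i w"
    using root_word[OF assms(7)] by blast
  obtain t3 w' where t3: "cp d t3" "w' \<in> TV d" "length w' = length ys - 1"
      "\<forall>i<length ys. t3 (ys ! i) = take i w'"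
    using root_word[OF assms(8)] by blast
  interpret S: Setting d F F' w w'
    using assms t1 t3 by unfold_locales auto
  interpret H: Lctx d "LL F F' w w'" by (rule S.Lctx)
  let ?L = "LL F F' w w'"
  let ?h = "hmap ?L"
  define t2 where "t2 = inv_into (TV d) t3"
  have t2: "cp d t2" unfolding t2_def using cp_inv[OF t3(1)] .
  define g where "g = t2 \<circ> ?h \<circ> t1"
  have a1: "aut d t1" and a2: "aut d t2" and a3: "aut d t3" using t1 t2 t3 cp_def by auto
  have ag: "aut d g" unfolding g_def using aut_comp[OF aut_comp[OF a2 H.h_aut] a1] .
  have bij3: "bij_betw t3 (TV d) (TV d)" using a3 aut_def by auto
  have ysTV: "set ys \<subseteq> TV d" using assms(8) unfolding geodesic_def walk_def by auto
  have map: "g (xs ! i) = ys ! i" if i: "i < length xs" for i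
  proof -
    have "g (xs ! i) = t2 (?h (take i w))" using t1(4) i by (simp add: g_def)
    also have "?h (take i w) = take i w'" using S.h_w by (simp add: hmap_take)
    also have "take i w' = t3 (ys ! i)" using t3(4) i assms(9) by simp
    also have "t2 (t3 (ys ! i)) = ys ! i" unfolding t2_def
      using bij3 ysTV i assms(9) by (simp add: bij_betw_def inv_into_f_f subset_iff)
    finally show ?thesis .
  qed
  have sig: "sigma d g v = ?L (t1 v)" if v: "v \<in> TV d" for v
  proof
    fix a show "sigma d g v a = ?L (t1 v) a"
    proof (cases "a \<in> Om d")
      case True
      have tv: "t1 v \<in> TV d" using aut_TV[OF a1 v] .
      have b: "?L (t1 v) a \<in> Om d" using H.Lin[OF True] .
      have "g (nbr v a) = t2 (?h (nbr (t1 v) a))" using t1(1) v True unfolding g_def cp_def by simp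
      also have "\<dots> = t2 (nbr (?h (t1 v)) (?L (t1 v) a))" using H.h_nbr[OF tv True] by simp
      also have "\<dots> = nbr (g v) (?L (t1 v) a)"
        using t2 H.h_TV[OF tv] b unfolding cp_def g_def by simp
      finally show ?thesis using sigma_eq[OF True b] by blast
    next
      case False
      then show ?thesis using H.perm[of "t1 v"] unfolding sigma_def by (simp add: permutes_not_in)
    qed
  qed
  have U: "g \<in> Uset d F'" unfolding Uset_def using ag sig S.L_F' by auto
  have "{v \<in> TV d. sigma d g v \<notin> F} \<subseteq> inv_into (TV d) t1 ` {u \<in> TV d. ?L u \<notin> F}"
  proof
    fix v assume "v \<in> {v \<in> TV d. sigma d g v \<notin> F}"
    then have v: "v \<in> TV d" "?L (t1 v) \<notin> F" using sig by auto
    have "inj_on t1 (TV d)" using a1 unfolding aut_def bij_betw_def by auto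
    then have "v = inv_into (TV d) t1 (t1 v)" using v by simp
    then show "v \<in> inv_into (TV d) t1 ` {u \<in> TV d. ?L u \<notin> F}" using v aut_TV[OF a1 v(1)] by blast
  qed
  then have "finite {v \<in> TV d. sigma d g v \<notin> F}" using S.bad_finite finite_subset by blast
  then have "g \<in> Gset d F" unfolding Gset_def using ag by auto
  with U have "g \<in> GFF d F F'" unfolding GFF_def by auto
  with map show ?thesis by blast
qed


end
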